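(* Let $\mathfrak c\in\mathfrak C_{\mathrm{Rot}}$. Then there exists $C=C(\mathfrak c)>0$ such that for all $j\ge-1$, all $s\in\mathbb R$ and all $r_1,r_2\ge s$, $$\big|\langle S_j\mathcal E_{\mathfrak c}\mathbf 1_{[s,r_1]},f^j_{\mathfrak c,r_2}\rangle_{L^2(\mathbb R^2)}\big|\le C,$$ and hence for all $t\ge s$, $\big|\int_s^t\langle S_j\mathcal E_{\mathfrak c}\mathbf 1_{[s,r]},f^j_{\mathfrak c,r}\rangle\,dr\big|\le C(t-s)$.
   Context: Littlewood–Paley: fix a radial $C^\infty$ $\rho_0\ge0$ on $\mathbb R^2$ supported in $\{6/7\le|\xi|\le2\}$ with $\sum_{j\in\mathbb Z}\rho_0(2^{-j}\xi)=1$ for $\xi\ne0$; $\chi_0(\xi)=\sum_{j\le-1}\rho_0(2^{-j}\xi)$ ($\xi\ne0$), $\chi_0(0)=1$, $\chi_j=\chi_0(2^{-j}\cdot)$, $\check\chi_j=\mathcal F^{-1}\chi_j$, $S_ju=\check\chi_j*u$. Curves: $\mathfrak C$ = smooth $\mathfrak c=(\mathfrak c_1,\mathfrak c_2):\mathbb R\to\mathbb R^2$ with $\operatorname{supp}\dot{\mathfrak c}\subset[0,1]$ and $\mathfrak c_1(t)>0$. For bounded $h$, $\mathcal E_{\mathfrak c}h\in L^2(\mathbb R^2)$ is determined by $\langle H,\mathcal E_{\mathfrak c}h\rangle=\int_{\mathbb R}\int_0^{\mathfrak c_1(t)}H(x_1,\mathfrak c_2(t))h(t)\dot{\mathfrak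 c}_2(t)dx_1dt$. $\mathrm{Rot}(\mathfrak c)=\sup_{s<t}\|\mathcal E_{\mathfrak c}\mathbf 1_{[s,t]}\|_{L^\infty}$, $\mathfrak C_{\mathrm{Rot}}=\{\mathfrak c:\mathrm{Rot}(\mathfrak c)<\infty\}$. $f^j_{\mathfrak c,t}(x_1,x_2):=\dot{\mathfrak c}_2(t)\int_0^{\mathfrak c_1(t)}\check\chi_j(x_1-\xi,x_2-\mathfrak c_2(t))d\xi$ ($=\frac{d}{dt}S_j\mathcal E_{\mathfrak c}\mathbf 1_{[s,t]}$). *)

theory Defs
  imports "HOL-Analysis.Analysis"
begin

definition smooth1 :: "(real \<Rightarrow> real) \<Rightarrow> bool" where
  "smooth1 f \<longleftrightarrow> (\<forall>n x. ((deriv ^^ n) f) differentiable (at x))"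

definition pderiv2 :: "real \<times> real \<Rightarrow> (real \<times> real \<Rightarrow> real) \<Rightarrow> real \<times> real \<Rightarrow> real" where
  "pderiv2 v f x = deriv (\<lambda>t. f (x + t *\<^sub>R v)) 0"

definition smooth2 :: "(real \<times> real \<Rightarrow> real) \<Rightarrow> bool" where
  "smooth2 f \<longleftrightarrow>
     (\<forall>vs. set vs \<subseteq> {(1,0),(0,1)} \<longrightarrow>
        continuous_on UNIV (foldr pderiv2 vs f) \<and>
        (\<forall>v\<in>{(1,0),(0,1)}. \<forall>x. (\<lambda>t. foldr pderiv2 vs f (x + t *\<^sub>R v)) differentiable (at 0)))"

definition LP_profile :: "(real \<times> real \<Rightarrow> real) \<Rightarrow> bool" where
  "LP_profile \<rho>0 \<longleftrightarrow>
     smooth2 \<rho>0 \<and>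
     (\<forall>x y. norm x = norm y \<longrightarrow> \<rho>0 x = \<rho>0 y) \<and>
     (\<forall>\<xi>. 0 \<le> \<rho>0 \<xi>) \<and>
     (\<forall>\<xi>. \<rho>0 \<xi> \<noteq> 0 \<longrightarrow> 6/7 \<le> norm \<xi> \<and> norm \<xi> \<le> 2) \<and>
     (\<forall>\<xi>. \<xi> \<noteq> 0 \<longrightarrow> ((\<lambda>j::int. \<rho>0 (2 powr (- real_of_int j) *\<^sub>R \<xi>)) has_sum 1) UNIV)"

definition chi0 :: "(real \<times> real \<Rightarrow> real) \<Rightarrow> real \<times> real \<Rightarrow> real" where
  "chi0 \<rho>0 \<xi> = (if \<xi> = 0 then 1
      else infsum (\<lambda>j::int. \<rho>0 (2 powr (- real_of_int j) *\<^sub>R \<xi>)) {..-1})"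

definition chi :: "(real \<times> real \<Rightarrow> real) \<Rightarrow> int \<Rightarrow> real \<times> real \<Rightarrow> real" where
  "chi \<rho>0 j \<xi> = chi0 \<rho>0 (2 powr (- real_of_int j) *\<^sub>R \<xi>)"

text \<open>Inverse Fourier transform (convention: F f(xi) = integral f(x) e^{-i x.xi} dx).\<close>
definition chi_check :: "(real \<times> real \<Rightarrow> real) \<Rightarrow> int \<Rightarrow> real \<times> real \<Rightarrow> complex" where
  "chi_check \<rho>0 j x =
     (1 / (2 * pi)^2) *\<^sub>R (\<integral>\<xi>. of_real (chi \<rho>0 j \<xi>) * cis (x \<bullet> \<xi>) \<partial>lborel)"

definition Sj :: "(real \<times> real \<Rightarrow> real) \<Rightarrow> int \<Rightarrow> (real \<times> real \<Rightarrow> real) \<Rightarrow> real \<times> real \<Rightarrow> complex" where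
  "Sj \<rho>0 j u x = (\<integral>y. chi_check \<rho>0 j (x - y) * of_real (u y) \<partial>lborel)"

definition L2_inner :: "(real \<times> real \<Rightarrow> complex) \<Rightarrow> (real \<times> real \<Rightarrow> complex) \<Rightarrow> complex" where
  "L2_inner f g = (\<integral>x. f x * cnj (g x) \<partial>lborel)"

definition curve :: "(real \<Rightarrow> real \<times> real) \<Rightarrow> bool" where
  "curve c \<longleftrightarrow> smooth1 (\<lambda>t. fst (c t)) \<and> smooth1 (\<lambda>t. snd (c t)) \<and>
     (\<forall>t. t \<notin> {0..1} \<longrightarrow> deriv (\<lambda>\<tau>. fst (c \<tau>)) t = 0 \<and> deriv (\<lambda>\<tau>. snd (c \<tau>)) t = 0) \<and>
     (\<forall>t. fst (c t) > 0)"

text \<open>F is (a representative of) E_c h: F is in L^2 and satisfies the defining duality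
  against all continuous compactly supported test functions H.\<close>
definition E_rep :: "(real \<Rightarrow> real \<times> real) \<Rightarrow> (real \<Rightarrow> real) \<Rightarrow> (real \<times> real \<Rightarrow> real) \<Rightarrow> bool" where
  "E_rep c h F \<longleftrightarrow>
     F \<in> borel_measurable lborel \<and> integrable lborel (\<lambda>x. (F x)^2) \<and>
     (\<forall>H :: real \<times> real \<Rightarrow> real. continuous_on UNIV H \<and> compact (closure {x. H x \<noteq> 0}) \<longrightarrow>
        (\<integral>x. H x * F x \<partial>lborel) =
        (\<integral>t. (LBINT x1=0..fst (c t). H (x1, snd (c t))) * h t * deriv (\<lambda>\<tau>. snd (c \<tau>)) t \<partial>lborel))"

text \<open>Rot(c) < infinity: E_c 1_[s,t] exists for all s<t and sup_{s<t} of its L-infinity norm is finite.\<close>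
definition CRot :: "(real \<Rightarrow> real \<times> real) set" where
  "CRot = {c. curve c \<and>
     (\<exists>M. \<forall>s t. s < t \<longrightarrow>
        (\<exists>F. E_rep c (indicator {s..t}) F) \<and>
        (\<forall>F. E_rep c (indicator {s..t}) F \<longrightarrow> (AE x in lborel. \<bar>F x\<bar> \<le> M)))}"

definition fj :: "(real \<times> real \<Rightarrow> real) \<Rightarrow> int \<Rightarrow> (real \<Rightarrow> real \<times> real) \<Rightarrow> real \<Rightarrow> real \<times> real \<Rightarrow> complex" where
  "fj \<rho>0 j c t x =
     of_real (deriv (\<lambda>\<tau>. snd (c \<tau>)) t) *
     (LBINT \<xi>=0..fst (c t). chi_check \<rho>0 j (fst x - \<xi>, snd x - snd (c t)))"

end

theory Submission
  imports Defs
begin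
abbreviation "e1 \<equiv> (1::real, 0::real)"
abbreviation "e2 \<equiv> (0::real, 1::real)"

lemma foldr_local:
  assumes "open U" "\<And>y. y \<in> U \<Longrightarrow> f y = h y"
  shows "\<forall>x\<in>U. foldr pderiv2 vs f x = foldr pderiv2 vs h x"
proof (induction vs)
  case Nil then show ?case using assms by simp
next
  case (Cons v vs)
  show ?case
  proof
    fix x assume x: "x \<in> U"
    have "eventually (\<lambda>t. x + t *\<^sub>R v \<in> U) (nhds 0)"
    proof -
      have "open ((\<lambda>t::real. x + t *\<^sub>R v) -` U)"
        by (rule continuous_open_vimage) (auto intro!: continuous_intros assms(1))
      from eventually_nhds_in_open[OF this, of 0] show ?thesis using x by simp
    qed
    then have "eventually (\<lambda>t. foldr pderiv2 vs f (x + t *\<^sub>R v) = foldr pderiv2 vs h (x + t *\<^sub>R v)) (nhds 0)"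
      by eventually_elim (use Cons in auto)
    then show "foldr pderiv2 (v # vs) f x = foldr pderiv2 (v # vs) h x"
      by (simp add: pderiv2_def deriv_cong_ev)
  qed
qed

lemma ev_line:
  fixes x v :: "real \<times> real"
  assumes "open U" "x \<in> U"
  shows "eventually (\<lambda>t::real. x + t *\<^sub>R v \<in> U) (nhds 0)"
proof -
  have "open ((\<lambda>t::real. x + t *\<^sub>R v) -` U)"
    by (rule continuous_open_vimage) (auto intro!: continuous_intros assms(1))
  from eventually_nhds_in_open[OF this, of 0] show ?thesis using assms by simp
qed

lemma diff_cong_ev:
  fixes f g :: "real \<Rightarrow> real"
  assumes "eventually (\<lambda>t. f t = g t) (nhds x)" "g differentiable at x"
  shows "f differentiable at x"
proof -
  have "DERIV g x :> deriv g x" using assms(2) DERIV_deriv_iff_real_differentiable by blast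
  then have "DERIV f x :> deriv g x" using DERIV_cong_ev[OF refl assms(1) refl] by simp
  then have "DERIV f x :> deriv f x" using DERIV_imp_deriv by metis
  then show ?thesis using DERIV_deriv_iff_real_differentiable by blast
qed

lemma smooth2_local:
  assumes "\<And>x. \<exists>U h. open U \<and> x \<in> U \<and> smooth2 h \<and> (\<forall>y\<in>U. f y = h y)"
  shows "smooth2 f"
  unfolding smooth2_def
proof (intro allI impI conjI ballI)
  fix vs :: "(real\<times>real) list" assume vs: "set vs \<subseteq> {e1,e2}"
  show "continuous_on UNIV (foldr pderiv2 vs f)"
  proof (rule continuous_at_imp_continuous_on, rule ballI)
    fix x :: "real \<times> real"
    obtain U h where U: "open U" "x\<in>U" "smooth2 h" "\<forall>y\<in>U. f y = h y" using assms by blast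
    have eq: "\<forall>y\<in>U. foldr pderiv2 vs f y = foldr pderiv2 vs h y" using foldr_local[OF U(1)] U(4) by blast
    have "continuous_on UNIV (foldr pderiv2 vs h)" using U(3) vs unfolding smooth2_def by blast
    then have "isCont (foldr pderiv2 vs h) x" 
      using continuous_on_eq_continuous_at[OF open_UNIV] by blast
    moreover have "eventually (\<lambda>y. foldr pderiv2 vs f y = foldr pderiv2 vs h y) (nhds x)"
      using eventually_nhds_in_open[OF U(1) U(2)] by eventually_elim (use eq in auto)
    ultimately show "isCont (foldr pderiv2 vs f) x" by (simp add: isCont_cong)
  qed
  fix v x assume v: "v \<in> {e1,e2}"
  obtain U h where U: "open U" "x\<in>U" "smooth2 h" "\<forall>y\<in>U. f y = h y" using assms by blast
  have eq: "\<forall>y\<in>U. foldr pderiv2 vs f y = foldr pderiv2 vs h y" using foldr_local[OF U(1)] U(4) by blast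
  have d: "(\<lambda>t. foldr pderiv2 vs h (x + t *\<^sub>R v)) differentiable at 0"
    using U(3) vs v unfolding smooth2_def by blast
  have ev: "eventually (\<lambda>t. foldr pderiv2 vs f (x + t *\<^sub>R v) = foldr pderiv2 vs h (x + t *\<^sub>R v)) (nhds 0)"
    using ev_line[OF U(1) U(2), of v] by eventually_elim (use eq in auto)
  show "(\<lambda>t. foldr pderiv2 vs f (x + t *\<^sub>R v)) differentiable at 0"
    by (rule diff_cong_ev[OF ev d])
qed

lemma foldr_zero: "foldr pderiv2 vs (\<lambda>_. 0) = (\<lambda>_. 0)"
  by (induction vs) (auto simp: pderiv2_def fun_eq_iff)

lemma smooth2_zero: "smooth2 (\<lambda>_. 0)"
  unfolding smooth2_def foldr_zero by auto

lemma smooth2_DERIV: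
  assumes "smooth2 f" "set vs \<subseteq> {e1,e2}" "v \<in> {e1,e2}"
  shows "((\<lambda>t. foldr pderiv2 vs f (x + t *\<^sub>R v)) has_real_derivative foldr pderiv2 (v#vs) f x) (at 0)"
proof -
  have "(\<lambda>t. foldr pderiv2 vs f (x + t *\<^sub>R v)) differentiable at 0"
    using assms unfolding smooth2_def by blast
  then show ?thesis using DERIV_deriv_iff_real_differentiable by (simp add: pderiv2_def)
qed

lemma smooth2_pderiv:
  assumes "smooth2 f" "v \<in> {e1,e2}"
  shows "smooth2 (pderiv2 v f)"
proof -
  have *: "foldr pderiv2 vs (pderiv2 v f) = foldr pderiv2 (vs @ [v]) f" for vs by simp
  show ?thesis unfolding smooth2_def *
  proof (intro allI impI)
    fix vs :: "(real\<times>real) list" assume "set vs \<subseteq> {e1,e2}"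
    then have "set (vs @ [v]) \<subseteq> {e1,e2}" using assms(2) by auto
    then show "continuous_on UNIV (foldr pderiv2 (vs @ [v]) f) \<and>
         (\<forall>va\<in>{e1, e2}. \<forall>x. (\<lambda>t. foldr pderiv2 (vs @ [v]) f (x + t *\<^sub>R va)) differentiable at 0)"
      using assms(1) unfolding smooth2_def by blast
  qed
qed

lemma g_line_DERIV:
  assumes "smooth2 \<rho>" "set vs \<subseteq> {e1,e2}" "v \<in> {e1,e2}"
  shows "((\<lambda>t. c - foldr pderiv2 vs \<rho> (x + t *\<^sub>R v) - k * foldr pderiv2 vs \<rho> ((1/2) *\<^sub>R (x + t *\<^sub>R v)))
     has_real_derivative (- foldr pderiv2 (v#vs) \<rho> x - k * ((1/2) * foldr pderiv2 (v#vs) \<rho> ((1/2) *\<^sub>R x)))) (at 0)"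
proof -
  have d1: "((\<lambda>t. foldr pderiv2 vs \<rho> (x + t *\<^sub>R v)) has_real_derivative foldr pderiv2 (v#vs) \<rho> x) (at 0)"
    using smooth2_DERIV[OF assms] .
  have d2: "((\<lambda>s. foldr pderiv2 vs \<rho> ((1/2) *\<^sub>R x + s *\<^sub>R v)) has_real_derivative foldr pderiv2 (v#vs) \<rho> ((1/2) *\<^sub>R x)) (at ((\<lambda>t::real. t/2) 0))"
    using smooth2_DERIV[OF assms, of "(1/2) *\<^sub>R x"] by simp
  have d3: "((\<lambda>t::real. t/2) has_real_derivative 1/2) (at 0)"
    by (auto intro!: derivative_eq_intros)
  have d4: "((\<lambda>t. foldr pderiv2 vs \<rho> ((1/2) *\<^sub>R x + (t/2) *\<^sub>R v)) has_real_derivative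
      foldr pderiv2 (v#vs) \<rho> ((1/2) *\<^sub>R x) * (1/2)) (at 0)"
    using DERIV_chain2[OF d2 d3] by simp
  have eq: "(1/2) *\<^sub>R (x + t *\<^sub>R v) = (1/2) *\<^sub>R x + (t/2) *\<^sub>R v" for t
    by (simp add: scaleR_add_right)
  have "((\<lambda>t. c - foldr pderiv2 vs \<rho> (x + t *\<^sub>R v) - k * foldr pderiv2 vs \<rho> ((1/2) *\<^sub>R x + (t/2) *\<^sub>R v))
     has_real_derivative (0 - foldr pderiv2 (v#vs) \<rho> x - k * (foldr pderiv2 (v#vs) \<rho> ((1/2) *\<^sub>R x) * (1/2)))) (at 0)"
    by (intro DERIV_diff DERIV_cmult DERIV_const d1 d4)
  then show ?thesis unfolding eq by (simp add: algebra_simps)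
qed

lemma DERIV_differentiable_real:
  fixes f :: "real \<Rightarrow> real"
  shows "DERIV f x :> D \<Longrightarrow> f differentiable at x"
  by (metis DERIV_deriv_iff_real_differentiable DERIV_imp_deriv)

lemma g_formula:
  assumes "smooth2 \<rho>" "set vs \<subseteq> {e1,e2}"
  shows "foldr pderiv2 vs (\<lambda>\<xi>. 1 - \<rho> \<xi> - \<rho> ((1/2) *\<^sub>R \<xi>)) =
    (\<lambda>\<xi>. (if vs = [] then 1 else 0) - foldr pderiv2 vs \<rho> \<xi> - (1/2)^length vs * foldr pderiv2 vs \<rho> ((1/2) *\<^sub>R \<xi>))"
  using assms(2)
proof (induction vs)
  case Nil then show ?case by simp
next
  case (Cons v vs)
  then have vs: "set vs \<subseteq> {e1,e2}" and v: "v \<in> {e1,e2}" by auto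
  show ?case
  proof
    fix x
    have "foldr pderiv2 (v#vs) (\<lambda>\<xi>. 1 - \<rho> \<xi> - \<rho> ((1/2) *\<^sub>R \<xi>)) x =
      pderiv2 v (\<lambda>\<xi>. (if vs = [] then 1 else 0) - foldr pderiv2 vs \<rho> \<xi> - (1/2)^length vs * foldr pderiv2 vs \<rho> ((1/2) *\<^sub>R \<xi>)) x"
      by (simp only: foldr_Cons o_apply Cons(1)[OF vs])
    also have "\<dots> =
      deriv (\<lambda>t. (if vs = [] then 1 else 0) - foldr pderiv2 vs \<rho> (x + t *\<^sub>R v) - (1/2)^length vs * foldr pderiv2 vs \<rho> ((1/2) *\<^sub>R (x + t *\<^sub>R v))) 0"
      by (rule pderiv2_def)
    also have "\<dots> = - foldr pderiv2 (v#vs) \<rho> x - (1/2)^length vs * ((1/2) * foldr pderiv2 (v#vs) \<rho> ((1/2) *\<^sub>R x))"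
      by (rule DERIV_imp_deriv[OF g_line_DERIV[OF assms(1) vs v]])
    finally show "foldr pderiv2 (v#vs) (\<lambda>\<xi>. 1 - \<rho> \<xi> - \<rho> ((1/2) *\<^sub>R \<xi>)) x =
      (if v # vs = [] then 1 else 0) - foldr pderiv2 (v#vs) \<rho> x - (1/2)^length (v#vs) * foldr pderiv2 (v#vs) \<rho> ((1/2) *\<^sub>R x)"
      by simp
  qed
qed

lemma smooth2_g:
  assumes "smooth2 \<rho>"
  shows "smooth2 (\<lambda>\<xi>. 1 - \<rho> \<xi> - \<rho> ((1/2) *\<^sub>R \<xi>))"
  unfolding smooth2_def
proof (intro allI impI conjI ballI)
  fix vs :: "(real\<times>real) list" assume vs: "set vs \<subseteq> {e1,e2}"
  have c: "isCont (foldr pderiv2 vs \<rho>) y" for y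
    using assms vs unfolding smooth2_def using continuous_on_eq_continuous_at[OF open_UNIV] by blast
  show "continuous_on UNIV (foldr pderiv2 vs (\<lambda>\<xi>. 1 - \<rho> \<xi> - \<rho> ((1/2) *\<^sub>R \<xi>)))"
    unfolding g_formula[OF assms vs]
    by (intro continuous_at_imp_continuous_on ballI continuous_intros c isCont_o2[OF _ c]) 
  fix v x assume v: "v \<in> {e1,e2}"
  show "(\<lambda>t. foldr pderiv2 vs (\<lambda>\<xi>. 1 - \<rho> \<xi> - \<rho> ((1/2) *\<^sub>R \<xi>)) (x + t *\<^sub>R v)) differentiable at 0"
    unfolding g_formula[OF assms vs]
    by (rule DERIV_differentiable_real[OF g_line_DERIV[OF assms vs v]])
qed

lemma LP_smooth: "LP_profile \<rho> \<Longrightarrow> smooth2 \<rho>" unfolding LP_profile_def by blast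

lemma LP_supp: "LP_profile \<rho> \<Longrightarrow> \<rho> \<xi> \<noteq> 0 \<Longrightarrow> 6/7 \<le> norm \<xi> \<and> norm \<xi> \<le> 2"
  unfolding LP_profile_def by blast

lemma rho_small: "LP_profile \<rho> \<Longrightarrow> norm \<xi> < 6/7 \<Longrightarrow> \<rho> \<xi> = 0"
  using LP_supp by fastforce

lemma rho_big: "LP_profile \<rho> \<Longrightarrow> norm \<xi> > 2 \<Longrightarrow> \<rho> \<xi> = 0"
  using LP_supp by fastforce

lemma chi0_near:
  assumes lp: "LP_profile \<rho>" and n: "norm \<xi> < 24/7"
  shows "chi0 \<rho> \<xi> = 1 - \<rho> \<xi> - \<rho> ((1/2) *\<^sub>R \<xi>)"
proof (cases "\<xi> = 0")
  case True then show ?thesis using rho_small[OF lp, of 0] by (simp add: chi0_def)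
next
  case False
  define f where "f = (\<lambda>j::int. \<rho> (2 powr (- real_of_int j) *\<^sub>R \<xi>))"
  have all: "(f has_sum 1) UNIV" using lp False unfolding LP_profile_def f_def by blast
  have z: "f j = 0" if "j \<in> {0..} - {0,1}" for j
  proof -
    from that have j: "real_of_int j \<ge> 2" by auto
    have "2 powr (- real_of_int j) \<le> 2 powr (-2)" using j by (intro powr_mono) auto
    also have "\<dots> = 1/4" by (simp add: powr_minus powr_numeral)
    finally have p: "2 powr (- real_of_int j) \<le> 1/4" .
    have "norm (2 powr (- real_of_int j) *\<^sub>R \<xi>) = 2 powr (- real_of_int j) * norm \<xi>" by simp
    also have "\<dots> \<le> 1/4 * norm \<xi>" using p by (intro mult_right_mono) auto
    also have "\<dots> < 6/7" using n by simp
    finally show ?thesis unfolding f_def by (rule rho_small[OF lp])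
  qed
  have "(f has_sum (sum f {0,1})) {0,1}" by (rule has_sum_finite) simp
  then have fin: "(f has_sum (\<rho> \<xi> + \<rho> ((1/2) *\<^sub>R \<xi>))) {0..}"
    by (subst has_sum_cong_neutral[where T="{0,1}" and g=f]) (use z in \<open>auto simp: f_def powr_minus\<close>)
  have "(f has_sum (1 - (\<rho> \<xi> + \<rho> ((1/2) *\<^sub>R \<xi>)))) (UNIV - {0..})"
    by (rule has_sum_Diff[OF all fin]) simp
  moreover have "UNIV - {0::int..} = {..-1}" by auto
  ultimately have "(f has_sum (1 - (\<rho> \<xi> + \<rho> ((1/2) *\<^sub>R \<xi>)))) {..-1}" by simp
  then have "infsum f {..-1} = 1 - (\<rho> \<xi> + \<rho> ((1/2) *\<^sub>R \<xi>))" by (rule infsumI)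
  then show ?thesis using False by (simp add: chi0_def f_def)
qed

lemma chi0_far:
  assumes lp: "LP_profile \<rho>" and n: "norm \<xi> > 1"
  shows "chi0 \<rho> \<xi> = 0"
proof -
  have "\<xi> \<noteq> 0" using n by auto
  moreover have "infsum (\<lambda>j::int. \<rho> (2 powr (- real_of_int j) *\<^sub>R \<xi>)) {..-1} = 0"
  proof (rule infsum_0)
    fix j :: int assume "j \<in> {..-1}"
    then have j: "- real_of_int j \<ge> 1" by auto
    have "2 powr 1 \<le> 2 powr (- real_of_int j)" using j by (intro powr_mono) auto
    then have p: "2 \<le> 2 powr (- real_of_int j)" by simp
    have "2 < 2 * norm \<xi>" using n by simp
    also have "\<dots> \<le> 2 powr (- real_of_int j) * norm \<xi>" using p by (intro mult_right_mono) auto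
    also have "\<dots> = norm (2 powr (- real_of_int j) *\<^sub>R \<xi>)" by simp
    finally show "\<rho> (2 powr (- real_of_int j) *\<^sub>R \<xi>) = 0" by (rule rho_big[OF lp])
  qed
  ultimately show ?thesis by (simp add: chi0_def)
qed

lemma smooth2_chi0:
  assumes lp: "LP_profile \<rho>"
  shows "smooth2 (chi0 \<rho>)"
proof (rule smooth2_local)
  fix x :: "real \<times> real"
  have o1: "open {y::real\<times>real. norm y < 24/7}"
    using open_ball[of "0::real\<times>real" "24/7"] by (simp add: ball_def)
  have o2: "open {y::real\<times>real. 1 < norm y}"
  proof -
    have "{y::real\<times>real. 1 < norm y} = - cball 0 1" by (auto simp: cball_def)
    then show ?thesis by (simp add: open_Compl)
  qed
  show "\<exists>U h. open U \<and> x \<in> U \<and> smooth2 h \<and> (\<forall>y\<in>U. chi0 \<rho> y = h y)"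
  proof (cases "norm x < 24/7")
    case True
    then show ?thesis using o1 chi0_near[OF lp] smooth2_g[OF LP_smooth[OF lp]] by blast
  next
    case False
    then have "x \<in> {y. 1 < norm y}" by simp
    then show ?thesis using o2 chi0_far[OF lp] smooth2_zero by blast
  qed
qed

definition good :: "(real \<times> real \<Rightarrow> real) \<Rightarrow> bool" where
  "good h \<longleftrightarrow> smooth2 h \<and> (\<forall>\<xi>. 1 < norm \<xi> \<longrightarrow> h \<xi> = 0)"

lemma good_chi0: "LP_profile \<rho> \<Longrightarrow> good (chi0 \<rho>)"
  unfolding good_def using smooth2_chi0 chi0_far by blast

lemma good_pderiv:
  assumes "good h" "v \<in> {e1,e2}"
  shows "good (pderiv2 v h)"
proof -
  have "open {y::real\<times>real. 1 < norm y}"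
  proof -
    have "{y::real\<times>real. 1 < norm y} = - cball 0 1" by (auto simp: cball_def)
    then show ?thesis by (simp add: open_Compl)
  qed
  from foldr_local[OF this, of h "\<lambda>_. 0" "[v]"] assms(1)
  have "\<forall>x\<in>{y. 1 < norm y}. foldr pderiv2 [v] h x = foldr pderiv2 [v] (\<lambda>_. 0) x"
    unfolding good_def by blast
  then have "\<forall>x\<in>{y. 1 < norm y}. pderiv2 v h x = 0"
    unfolding foldr_zero by simp
  then show ?thesis using assms smooth2_pderiv unfolding good_def by auto
qed

definition FI :: "real \<times> real \<Rightarrow> (real \<times> real \<Rightarrow> real) \<Rightarrow> complex" where
  "FI x h = (\<integral>\<xi>. complex_of_real (h \<xi>) * cis (x \<bullet> \<xi>) \<partial>lborel)"

lemma good_cont: "good h \<Longrightarrow> continuous_on UNIV h"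
  unfolding good_def smooth2_def by (metis empty_set empty_subsetI foldr_Nil id_apply)

lemma int_cs:
  fixes f :: "'a::euclidean_space \<Rightarrow> 'b::{banach,second_countable_topology}"
  assumes "continuous_on UNIV f" "\<And>x. x \<notin> S \<Longrightarrow> f x = 0" "compact S"
  shows "integrable lborel f"
proof -
  have "integrable lborel (\<lambda>x. indicator S x *\<^sub>R f x)"
    by (rule borel_integrable_compact[OF assms(3)]) (rule continuous_on_subset[OF assms(1)], simp)
  moreover have "(\<lambda>x. indicator S x *\<^sub>R f x) = f" using assms(2) by (auto simp: indicator_def fun_eq_iff)
  ultimately show ?thesis by simp
qed

lemma good_zero: 
  assumes "good h" "\<xi> \<notin> cball 0 1" shows "h \<xi> = 0"
proof -
  have "1 < norm \<xi>" using assms(2) by (simp add: mem_cball)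
  then show ?thesis using assms(1) unfolding good_def by blast
qed

lemma int_FI:
  assumes "good h"
  shows "integrable lborel (\<lambda>\<xi>. complex_of_real (h \<xi>) * cis (x \<bullet> \<xi>))"
  by (rule int_cs[where S="cball 0 1"]) (use good_cont[OF assms] good_zero[OF assms] in \<open>auto intro!: continuous_intros\<close>)

lemma int_abs:
  assumes "good h"
  shows "integrable lborel (\<lambda>\<xi>. \<bar>h \<xi>\<bar>)"
  by (rule int_cs[where S="cball 0 1"]) (use good_cont[OF assms] good_zero[OF assms] in \<open>auto intro!: continuous_intros\<close>)

lemma FI_bound:
  assumes "good h"
  shows "cmod (FI x h) \<le> (\<integral>\<xi>. \<bar>h \<xi>\<bar> \<partial>lborel)"
proof -
  have "cmod (FI x h) \<le> (\<integral>\<xi>. cmod (complex_of_real (h \<xi>) * cis (x \<bullet> \<xi>)) \<partial>lborel)"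
    unfolding FI_def by (rule integral_norm_bound)
  also have "\<dots> = (\<integral>\<xi>. \<bar>h \<xi>\<bar> \<partial>lborel)" by (simp add: norm_mult)
  finally show ?thesis .
qed

lemma cis_vderiv:
  "((\<lambda>a. cis (u * a + c)) has_vector_derivative (\<i> * of_real u * cis (u * a + c))) (at a within S)"
proof -
  have "((\<lambda>z. exp (\<i> * (of_real u * z + of_real c))) has_field_derivative
     (exp (\<i> * (of_real u * of_real a + of_real c)) * (\<i> * of_real u))) (at (of_real a))"
    by (auto intro!: derivative_eq_intros)
  from has_vector_derivative_real_field[OF this, of S] show ?thesis
    by (simp add: cis_conv_exp algebra_simps)
qed

lemma line_int_zero:
  fixes \<psi> \<psi>' :: "real \<Rightarrow> complex"
  assumes "\<And>a. (\<psi> has_vector_derivative \<psi>' a) (at a)" "continuous_on UNIV \<psi>'"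
    "\<And>a. \<bar>a\<bar> > 1 \<Longrightarrow> \<psi> a = 0" "\<And>a. \<bar>a\<bar> > 1 \<Longrightarrow> \<psi>' a = 0"
  shows "integral\<^sup>L lborel \<psi>' = 0"
proof -
  have "(\<psi>' has_integral (\<psi> 2 - \<psi> (-2))) {-2..2}"
    by (rule fundamental_theorem_of_calculus) (auto intro: has_vector_derivative_at_within assms(1))
  then have "(\<psi>' has_integral 0) {-2..2}" using assms(3)[of 2] assms(3)[of "-2"] by simp
  then have "(\<psi>' has_integral 0) UNIV" by (rule has_integral_on_superset) (use assms(4) in auto)
  moreover have "integrable lborel \<psi>'"
    by (rule int_cs[where S="{-2..2}"]) (use assms(2,4) in auto)
  then have "(\<psi>' has_integral integral\<^sup>L lborel \<psi>') UNIV" by (rule has_integral_integral_lborel)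
  ultimately show ?thesis using has_integral_unique by metis
qed

lemma d1_lemma:
  assumes "good h"
  shows "((\<lambda>t. h (t, b)) has_real_derivative pderiv2 e1 h (a, b)) (at a)"
proof -
  have "((\<lambda>t. foldr pderiv2 [] h ((a,b) + t *\<^sub>R e1)) has_real_derivative foldr pderiv2 [e1] h (a,b)) (at 0)"
    by (rule smooth2_DERIV) (use assms in \<open>auto simp: good_def\<close>)
  then have "((\<lambda>t. h (t + a, b)) has_real_derivative pderiv2 e1 h (a,b)) (at 0)"
    by (simp add: add.commute)
  then show ?thesis using DERIV_shift[of "\<lambda>t. h (t, b)" _ 0 a] by simp
qed

lemma d2_lemma:
  assumes "good h"
  shows "((\<lambda>t. h (a, t)) has_real_derivative pderiv2 e2 h (a, b)) (at b)"
proof -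
  have "((\<lambda>t. foldr pderiv2 [] h ((a,b) + t *\<^sub>R e2)) has_real_derivative foldr pderiv2 [e2] h (a,b)) (at 0)"
    by (rule smooth2_DERIV) (use assms in \<open>auto simp: good_def\<close>)
  then have "((\<lambda>t. h (a, t + b)) has_real_derivative pderiv2 e2 h (a,b)) (at 0)"
    by (simp add: add.commute)
  then show ?thesis using DERIV_shift[of "\<lambda>t. h (a, t)" _ 0 b] by simp
qed

lemma vd_eq: "(f has_vector_derivative D) F \<Longrightarrow> D = E \<Longrightarrow> (f has_vector_derivative E) F" by simp

lemma cont_phi:
  assumes "good h" "good h'"
  shows "continuous_on UNIV (\<lambda>\<xi>. complex_of_real (h' \<xi>) * cis (x \<bullet> \<xi>) + \<i> * of_real u * (complex_of_real (h \<xi>) * cis (x \<bullet> \<xi>)))"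
  using good_cont[OF assms(1)] good_cont[OF assms(2)] by (intro continuous_intros) auto

lemma ibp1:
  assumes g: "good h"
  shows "FI x (pderiv2 e1 h) = - (\<i> * of_real (fst x)) * FI x h"
proof -
  obtain u w where x: "x = (u, w)" by (cases x)
  define h' where "h' = pderiv2 e1 h"
  have g': "good h'" unfolding h'_def by (rule good_pderiv[OF g]) simp
  define \<phi> where "\<phi> = (\<lambda>\<xi>. complex_of_real (h' \<xi>) * cis (x \<bullet> \<xi>) + \<i> * of_real u * (complex_of_real (h \<xi>) * cis (x \<bullet> \<xi>)))"
  have iA: "integrable lborel (\<lambda>\<xi>. complex_of_real (h' \<xi>) * cis (x \<bullet> \<xi>))" by (rule int_FI[OF g'])
  have iB: "integrable lborel (\<lambda>\<xi>. complex_of_real (h \<xi>) * cis (x \<bullet> \<xi>))" by (rule int_FI[OF g])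
  have i\<phi>: "integrable lborel \<phi>" unfolding \<phi>_def using iA iB by simp
  have cphi: "continuous_on UNIV \<phi>" unfolding \<phi>_def by (rule cont_phi[OF g g'])
  have eq1: "integral\<^sup>L lborel \<phi> = FI x h' + \<i> * of_real u * FI x h"
    unfolding \<phi>_def FI_def using iA iB by simp
  have inner: "(\<integral>a. \<phi> (a,b) \<partial>lborel) = 0" for b
    proof (rule line_int_zero[where \<psi>="\<lambda>a. complex_of_real (h (a,b)) * cis (u * a + w * b)"])
      fix a
      show "((\<lambda>a. complex_of_real (h (a,b)) * cis (u * a + w * b)) has_vector_derivative \<phi> (a,b)) (at a)"
        by (rule vd_eq[OF has_vector_derivative_mult[OF has_vector_derivative_of_real[OF d1_lemma[OF g]] cis_vderiv]])
           (simp add: \<phi>_def x h'_def algebra_simps)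
    next
      show "continuous_on UNIV (\<lambda>a. \<phi> (a, b))"
        by (rule continuous_on_compose2[OF cphi]) (auto intro!: continuous_intros)
    next
      fix a :: real assume a: "1 < \<bar>a\<bar>"
      have "1 < norm (a, b)" using a norm_fst_le[of a b] by simp
      then show "complex_of_real (h (a,b)) * cis (u * a + w * b) = 0"
        using g unfolding good_def by simp
    next
      fix a :: real assume a: "1 < \<bar>a\<bar>"
      have "1 < norm (a, b)" using a norm_fst_le[of a b] by simp
      then show "\<phi> (a, b) = 0"
        using g g' unfolding good_def \<phi>_def by simp
    qed
  have "integral\<^sup>L lborel \<phi> = integral\<^sup>L (lborel \<Otimes>\<^sub>M lborel) (case_prod (\<lambda>a b. \<phi> (a,b)))"
    by (simp add: lborel_prod)
  also have "\<dots> = (\<integral>b. (\<integral>a. \<phi> (a,b) \<partial>lborel) \<partial>lborel)"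
    by (rule lborel_pair.integral_snd[symmetric]) (simp add: lborel_prod i\<phi>)
  also have "\<dots> = (\<integral>(b::real). (0::complex) \<partial>lborel)"
    using inner by simp
  also have "\<dots> = 0" by simp
  finally show ?thesis using eq1 x h'_def by (simp add: algebra_simps add_eq_0_iff)
qed

lemma ibp2:
  assumes g: "good h"
  shows "FI x (pderiv2 e2 h) = - (\<i> * of_real (snd x)) * FI x h"
proof -
  obtain u w where x: "x = (u, w)" by (cases x)
  define h' where "h' = pderiv2 e2 h"
  have g': "good h'" unfolding h'_def by (rule good_pderiv[OF g]) simp
  define \<phi> where "\<phi> = (\<lambda>\<xi>. complex_of_real (h' \<xi>) * cis (x \<bullet> \<xi>) + \<i> * of_real w * (complex_of_real (h \<xi>) * cis (x \<bullet> \<xi>)))"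
  have iA: "integrable lborel (\<lambda>\<xi>. complex_of_real (h' \<xi>) * cis (x \<bullet> \<xi>))" by (rule int_FI[OF g'])
  have iB: "integrable lborel (\<lambda>\<xi>. complex_of_real (h \<xi>) * cis (x \<bullet> \<xi>))" by (rule int_FI[OF g])
  have i\<phi>: "integrable lborel \<phi>" unfolding \<phi>_def using iA iB by simp
  have cphi: "continuous_on UNIV \<phi>" unfolding \<phi>_def by (rule cont_phi[OF g g'])
  have eq1: "integral\<^sup>L lborel \<phi> = FI x h' + \<i> * of_real w * FI x h"
    unfolding \<phi>_def FI_def using iA iB by simp
  have inner: "(\<integral>b. \<phi> (a,b) \<partial>lborel) = 0" for a
    proof (rule line_int_zero[where \<psi>="\<lambda>b. complex_of_real (h (a,b)) * cis (w * b + u * a)"])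
      fix b
      show "((\<lambda>b. complex_of_real (h (a,b)) * cis (w * b + u * a)) has_vector_derivative \<phi> (a,b)) (at b)"
        by (rule vd_eq[OF has_vector_derivative_mult[OF has_vector_derivative_of_real[OF d2_lemma[OF g]] cis_vderiv]])
           (simp add: \<phi>_def x h'_def algebra_simps)
    next
      show "continuous_on UNIV (\<lambda>b. \<phi> (a, b))"
        by (rule continuous_on_compose2[OF cphi]) (auto intro!: continuous_intros)
    next
      fix b :: real assume b: "1 < \<bar>b\<bar>"
      have "1 < norm (a, b)" using b norm_snd_le[of b a] by simp
      then show "complex_of_real (h (a,b)) * cis (w * b + u * a) = 0"
        using g unfolding good_def by simp
    next
      fix b :: real assume b: "1 < \<bar>b\<bar>"
      have "1 < norm (a, b)" using b norm_snd_le[of b a] by simp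
      then show "\<phi> (a, b) = 0"
        using g g' unfolding good_def \<phi>_def by simp
    qed
  have "integral\<^sup>L lborel \<phi> = integral\<^sup>L (lborel \<Otimes>\<^sub>M lborel) (\<lambda>(a, b). \<phi> (a,b))"
    by (simp add: lborel_prod)
  also have "\<dots> = (\<integral>a. (\<integral>b. \<phi> (a,b) \<partial>lborel) \<partial>lborel)"
    by (rule lborel_pair.integral_fst[symmetric]) (simp add: lborel_prod i\<phi>)
  also have "\<dots> = (\<integral>(a::real). (0::complex) \<partial>lborel)"
    using inner by simp
  also have "\<dots> = 0" by simp
  finally show ?thesis using eq1 x h'_def by (simp add: algebra_simps add_eq_0_iff)
qed

lemma FI_decay:
  assumes g: "good h"
  shows "complex_of_real ((1 + (fst x)\<^sup>2) * (1 + (snd x)\<^sup>2)) * FI x h =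
    FI x h - FI x (pderiv2 e1 (pderiv2 e1 h)) - FI x (pderiv2 e2 (pderiv2 e2 h))
    + FI x (pderiv2 e2 (pderiv2 e2 (pderiv2 e1 (pderiv2 e1 h))))"
proof -
  have g1: "good (pderiv2 e1 h)" by (rule good_pderiv[OF g]) simp
  have g11: "good (pderiv2 e1 (pderiv2 e1 h))" by (rule good_pderiv[OF g1]) simp
  have g2: "good (pderiv2 e2 h)" by (rule good_pderiv[OF g]) simp
  have g112: "good (pderiv2 e2 (pderiv2 e1 (pderiv2 e1 h)))" by (rule good_pderiv[OF g11]) simp
  have a: "FI x (pderiv2 e1 (pderiv2 e1 h)) = - (of_real (fst x))\<^sup>2 * FI x h"
    using ibp1[OF g1, of x] ibp1[OF g, of x] by (simp add: power2_eq_square algebra_simps)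
  have b: "FI x (pderiv2 e2 (pderiv2 e2 h)) = - (of_real (snd x))\<^sup>2 * FI x h"
    using ibp2[OF g2, of x] ibp2[OF g, of x] by (simp add: power2_eq_square algebra_simps)
  have c: "FI x (pderiv2 e2 (pderiv2 e2 (pderiv2 e1 (pderiv2 e1 h)))) = - (of_real (snd x))\<^sup>2 * FI x (pderiv2 e1 (pderiv2 e1 h))"
    using ibp2[OF g112, of x] ibp2[OF g11, of x] by (simp add: power2_eq_square algebra_simps)
  show ?thesis unfolding c a b by (simp add: power2_eq_square algebra_simps)
qed

definition Bc :: "(real \<times> real \<Rightarrow> real) \<Rightarrow> real" where
  "Bc h = (\<integral>\<xi>. \<bar>h \<xi>\<bar> \<partial>lborel) + (\<integral>\<xi>. \<bar>pderiv2 e1 (pderiv2 e1 h) \<xi>\<bar> \<partial>lborel)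
     + (\<integral>\<xi>. \<bar>pderiv2 e2 (pderiv2 e2 h) \<xi>\<bar> \<partial>lborel)
     + (\<integral>\<xi>. \<bar>pderiv2 e2 (pderiv2 e2 (pderiv2 e1 (pderiv2 e1 h))) \<xi>\<bar> \<partial>lborel)"

lemma FI_bound2:
  assumes g: "good h"
  shows "cmod (FI x h) \<le> Bc h * (inverse (1 + (fst x)\<^sup>2) * inverse (1 + (snd x)\<^sup>2))"
proof -
  have g1: "good (pderiv2 e1 h)" by (rule good_pderiv[OF g]) simp
  have g11: "good (pderiv2 e1 (pderiv2 e1 h))" by (rule good_pderiv[OF g1]) simp
  have g2: "good (pderiv2 e2 h)" by (rule good_pderiv[OF g]) simp
  have g22: "good (pderiv2 e2 (pderiv2 e2 h))" by (rule good_pderiv[OF g2]) simp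
  have g112: "good (pderiv2 e2 (pderiv2 e1 (pderiv2 e1 h)))" by (rule good_pderiv[OF g11]) simp
  have g1122: "good (pderiv2 e2 (pderiv2 e2 (pderiv2 e1 (pderiv2 e1 h))))" by (rule good_pderiv[OF g112]) simp
  define P where "P = (1 + (fst x)\<^sup>2) * (1 + (snd x)\<^sup>2)"
  have P: "P > 0" unfolding P_def by (intro mult_pos_pos) (auto intro: add_pos_nonneg)
  have "P * cmod (FI x h) = cmod (complex_of_real P * FI x h)"
    using P by (simp only: norm_mult norm_of_real abs_of_pos)
  also have "\<dots> \<le> Bc h"
    unfolding P_def FI_decay[OF g] Bc_def
    using FI_bound[OF g, of x] FI_bound[OF g11, of x] FI_bound[OF g22, of x] FI_bound[OF g1122, of x]
    by (smt (verit, best) norm_diff_ineq norm_triangle_ineq4 norm_triangle_ineq)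
  finally have "P * cmod (FI x h) \<le> Bc h" .
  then have "cmod (FI x h) \<le> Bc h / P" using P by (simp add: field_simps)
  then show ?thesis unfolding P_def by (simp add: field_simps)
qed

lemma arctan_nn:
  "(\<integral>\<^sup>+a. ennreal (inverse (1 + a\<^sup>2)) \<partial>lborel) < \<infinity>"
proof -
  let ?f = "\<lambda>a::real. inverse (1 + a\<^sup>2)"
  have fm[measurable]: "?f \<in> borel_measurable borel" by measurable
  have half: "(\<integral>\<^sup>+a. ennreal (?f a) * indicator {0..} a \<partial>lborel) = pi/2 - arctan 0"
    by (rule nn_integral_FTC_atLeast[OF fm DERIV_arctan _ tendsto_arctan_at_top]) simp
  have half2: "(\<integral>\<^sup>+a. ennreal (?f (-a)) * indicator {0..} (-a) \<partial>lborel) =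
    (\<integral>\<^sup>+a. ennreal (?f a) * indicator {0..} a \<partial>lborel)"
    using nn_integral_real_affine[where c="-1" and t=0 and f="\<lambda>a. ennreal (?f a) * indicator {0..} a"]
    by simp
  have "(\<integral>\<^sup>+a. ennreal (?f a) \<partial>lborel) \<le>
     (\<integral>\<^sup>+a. ennreal (?f a) * indicator {0..} a + ennreal (?f (-a)) * indicator {0..} (-a) \<partial>lborel)"
    by (intro nn_integral_mono) (auto simp: indicator_def)
  also have "\<dots> = (\<integral>\<^sup>+a. ennreal (?f a) * indicator {0..} a \<partial>lborel) + (\<integral>\<^sup>+a. ennreal (?f (-a)) * indicator {0..} (-a) \<partial>lborel)"
    by (rule nn_integral_add) auto
  also have "\<dots> < \<infinity>" unfolding half2 half by simp
  finally show ?thesis .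
qed

lemma prod_nn:
  "(\<integral>\<^sup>+x. ennreal (inverse (1 + (fst x)\<^sup>2) * inverse (1 + (snd x)\<^sup>2)) \<partial>(lborel :: (real \<times> real) measure)) < \<infinity>"
proof -
  let ?f = "\<lambda>a::real. inverse (1 + a\<^sup>2)"
  have "(\<integral>\<^sup>+x. ennreal (?f (fst x) * ?f (snd x)) \<partial>(lborel :: (real \<times> real) measure)) =
     (\<integral>\<^sup>+x. ennreal (?f (fst x) * ?f (snd x)) \<partial>(lborel \<Otimes>\<^sub>M lborel))"
    by (simp add: lborel_prod)
  also have "\<dots> = (\<integral>\<^sup>+a. \<integral>\<^sup>+b. ennreal (?f a * ?f b) \<partial>lborel \<partial>lborel)"
  proof -
    have m: "(\<lambda>x::real\<times>real. ennreal (?f (fst x) * ?f (snd x))) \<in> borel_measurable (lborel \<Otimes>\<^sub>M lborel)"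
      by measurable
    show ?thesis using lborel.nn_integral_fst[OF m] by simp
  qed
  also have "\<dots> = (\<integral>\<^sup>+a. ennreal (?f a) * (\<integral>\<^sup>+b. ennreal (?f b) \<partial>lborel) \<partial>lborel)"
    by (intro nn_integral_cong) (simp add: ennreal_mult nn_integral_cmult)
  also have "\<dots> = (\<integral>\<^sup>+a. ennreal (?f a) \<partial>lborel) * (\<integral>\<^sup>+b. ennreal (?f b) \<partial>lborel)"
    by (simp add: nn_integral_multc)
  also have "\<dots> < \<infinity>" using arctan_nn by (simp add: ennreal_mult_less_top)
  finally show ?thesis .
qed

lemma one_plus_sq_nz: "1 + a\<^sup>2 \<noteq> (0::real)"
  by (smt (verit) zero_le_power2)

lemma nn_affine2:
  fixes f :: "real \<times> real \<Rightarrow> ennreal" and c :: real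
  assumes [measurable]: "f \<in> borel_measurable borel" and c: "c \<noteq> 0"
  shows "(\<integral>\<^sup>+x. f x \<partial>lborel) = ennreal (\<bar>c\<bar>^2) * (\<integral>\<^sup>+x. f (t + c *\<^sub>R x) \<partial>lborel)"
  by (subst lborel_affine[OF c, of t])
     (simp add: nn_integral_density nn_integral_distr nn_integral_cmult power2_eq_square)

lemma int_affine2:
  fixes f :: "real \<times> real \<Rightarrow> 'b::{banach,second_countable_topology}" and c :: real
  assumes [measurable]: "f \<in> borel_measurable borel" and c: "c \<noteq> 0"
  shows "integral\<^sup>L lborel f = (\<bar>c\<bar>^2) *\<^sub>R integral\<^sup>L lborel (\<lambda>x. f (t + c *\<^sub>R x))"
  by (subst lborel_affine[OF c, of t])
     (simp add: integral_density integral_distr power2_eq_square)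

lemma cont_chi0: "LP_profile \<rho> \<Longrightarrow> continuous_on UNIV (chi0 \<rho>)"
  by (rule good_cont[OF good_chi0])

lemma cont_chi: 
  assumes "LP_profile \<rho>" shows "continuous_on UNIV (chi \<rho> j)"
proof -
  have "continuous_on UNIV (\<lambda>\<xi>. chi0 \<rho> (2 powr (- real_of_int j) *\<^sub>R \<xi>))"
    by (rule continuous_on_compose2[OF cont_chi0[OF assms]]) (auto intro!: continuous_intros)
  then show ?thesis unfolding chi_def[abs_def] .
qed

lemma meas_chi_check:
  assumes lp: "LP_profile \<rho>"
  shows "chi_check \<rho> j \<in> borel_measurable borel"
proof -
  define F where "F = (\<lambda>p::(real\<times>real)\<times>(real\<times>real). complex_of_real (chi \<rho> j (snd p)) * cis (fst p \<bullet> snd p))"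
  have "continuous_on UNIV F" unfolding F_def
    by (intro continuous_intros continuous_on_compose2[OF cont_chi[OF lp]]) auto
  then have "F \<in> borel_measurable borel" by (rule borel_measurable_continuous_onI)
  then have "case_prod (\<lambda>x \<xi>. F (x, \<xi>)) \<in> borel_measurable (lborel \<Otimes>\<^sub>M lborel)"
    by (simp add: lborel_prod)
  from lborel.borel_measurable_lebesgue_integral[OF this]
  have "(\<lambda>x. \<integral>\<xi>. F (x, \<xi>) \<partial>lborel) \<in> borel_measurable lborel" .
  then have m: "(\<lambda>x. \<integral>\<xi>. F (x, \<xi>) \<partial>lborel) \<in> borel_measurable borel" by simp
  have "chi_check \<rho> j = (\<lambda>x. (1 / (2 * pi)^2) *\<^sub>R (\<integral>\<xi>. F (x, \<xi>) \<partial>lborel))"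
    unfolding chi_check_def[abs_def] F_def by simp
  then show ?thesis using m by simp
qed

lemma chi_check_scale:
  assumes lp: "LP_profile \<rho>"
  shows "chi_check \<rho> j x = ((2 powr real_of_int j)^2) *\<^sub>R chi_check \<rho> 0 ((2 powr real_of_int j) *\<^sub>R x)"
proof -
  define c where "c = 2 powr real_of_int j"
  have c: "c > 0" unfolding c_def by simp
  have cc: "2 powr (- real_of_int j) * c = 1" unfolding c_def by (simp add: powr_add[symmetric])
  define f where "f = (\<lambda>\<xi>. complex_of_real (chi \<rho> j \<xi>) * cis (x \<bullet> \<xi>))"
  have fm: "f \<in> borel_measurable borel" unfolding f_def
    by (intro borel_measurable_continuous_onI continuous_intros continuous_on_compose2[OF cont_chi[OF lp]]) auto
  have "integral\<^sup>L lborel f = (\<bar>c\<bar>^2) *\<^sub>R integral\<^sup>L lborel (\<lambda>\<eta>. f (0 + c *\<^sub>R \<eta>))"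
    by (rule int_affine2[OF fm]) (use c in auto)
  also have "(\<lambda>\<eta>. f (0 + c *\<^sub>R \<eta>)) = (\<lambda>\<eta>. complex_of_real (chi \<rho> 0 \<eta>) * cis ((c *\<^sub>R x) \<bullet> \<eta>))"
    unfolding f_def chi_def by (simp add: cc)
  finally show ?thesis unfolding chi_check_def f_def c_def[symmetric] using c by simp
qed

lemma chi_check_0:
  "chi_check \<rho> 0 x = (1 / (2 * pi)^2) *\<^sub>R FI x (chi0 \<rho>)"
  unfolding chi_check_def FI_def chi_def by simp

lemma L1_0:
  assumes lp: "LP_profile \<rho>"
  shows "(\<integral>\<^sup>+x. ennreal (cmod (chi_check \<rho> 0 x)) \<partial>lborel) < \<infinity>"
proof -
  define K where "K = (1 / (2 * pi)^2) * Bc (chi0 \<rho>)"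
  have b: "cmod (chi_check \<rho> 0 x) \<le> K * (inverse (1 + (fst x)\<^sup>2) * inverse (1 + (snd x)\<^sup>2))" for x
  proof -
    have "cmod (chi_check \<rho> 0 x) = (1 / (2 * pi)^2) * cmod (FI x (chi0 \<rho>))"
      unfolding chi_check_0 by simp
    also have "\<dots> \<le> (1 / (2 * pi)^2) * (Bc (chi0 \<rho>) * (inverse (1 + (fst x)\<^sup>2) * inverse (1 + (snd x)\<^sup>2)))"
      by (intro mult_left_mono FI_bound2 good_chi0[OF lp]) auto
    finally show ?thesis unfolding K_def by (simp add: algebra_simps)
  qed
  have "(\<integral>\<^sup>+x. ennreal (cmod (chi_check \<rho> 0 x)) \<partial>lborel) \<le>
     (\<integral>\<^sup>+x. ennreal K * ennreal (inverse (1 + (fst x)\<^sup>2) * inverse (1 + (snd x)\<^sup>2)) \<partial>lborel)"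
  proof (rule nn_integral_mono)
    fix x
    have "K * (inverse (1 + (fst x)\<^sup>2) * inverse (1 + (snd x)\<^sup>2)) \<ge> 0"
      using b[of x] norm_ge_zero order_trans by blast
    then have "ennreal (cmod (chi_check \<rho> 0 x)) \<le> ennreal (K * (inverse (1 + (fst x)\<^sup>2) * inverse (1 + (snd x)\<^sup>2)))"
      using b[of x] by (intro ennreal_leI) 
    also have "\<dots> \<le> ennreal K * ennreal (inverse (1 + (fst x)\<^sup>2) * inverse (1 + (snd x)\<^sup>2))"
      by (simp add: ennreal_mult'' )
    finally show "ennreal (cmod (chi_check \<rho> 0 x)) \<le> ennreal K * ennreal (inverse (1 + (fst x)\<^sup>2) * inverse (1 + (snd x)\<^sup>2))" .
  qed
  also have "\<dots> = ennreal K * (\<integral>\<^sup>+x. ennreal (inverse (1 + (fst x)\<^sup>2) * inverse (1 + (snd x)\<^sup>2)) \<partial>lborel)"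
  proof (rule nn_integral_cmult)
    have "(\<lambda>x::real\<times>real. inverse (1 + (fst x)\<^sup>2) * inverse (1 + (snd x)\<^sup>2)) \<in> borel_measurable borel"
      by (intro borel_measurable_continuous_onI continuous_intros) (auto simp: one_plus_sq_nz)
    then show "(\<lambda>x::real\<times>real. ennreal (inverse (1 + (fst x)\<^sup>2) * inverse (1 + (snd x)\<^sup>2))) \<in> borel_measurable lborel"
      by simp
  qed
  also have "\<dots> < \<infinity>" using prod_nn by (simp add: ennreal_mult_less_top)
  finally show ?thesis .
qed

lemma L1_j:
  assumes lp: "LP_profile \<rho>"
  shows "(\<integral>\<^sup>+x. ennreal (cmod (chi_check \<rho> j x)) \<partial>lborel) = (\<integral>\<^sup>+x. ennreal (cmod (chi_check \<rho> 0 x)) \<partial>lborel)"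
proof -
  define c where "c = 2 powr real_of_int j"
  have c: "c > 0" unfolding c_def by simp
  have m: "(\<lambda>y. ennreal (cmod (chi_check \<rho> 0 y))) \<in> borel_measurable borel"
    using meas_chi_check[OF lp, of 0] by measurable
  have "(\<integral>\<^sup>+x. ennreal (cmod (chi_check \<rho> j x)) \<partial>lborel) = (\<integral>\<^sup>+x. ennreal (c^2) * ennreal (cmod (chi_check \<rho> 0 (0 + c *\<^sub>R x))) \<partial>lborel)"
    by (intro nn_integral_cong) (simp add: chi_check_scale[OF lp, of j] c_def[symmetric] ennreal_mult'' c)
  also have "\<dots> = ennreal (c^2) * (\<integral>\<^sup>+x. ennreal (cmod (chi_check \<rho> 0 (0 + c *\<^sub>R x))) \<partial>lborel)"
    by (rule nn_integral_cmult) (use meas_chi_check[OF lp, of 0] in measurable)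
  also have "\<dots> = (\<integral>\<^sup>+x. ennreal (cmod (chi_check \<rho> 0 x)) \<partial>lborel)"
    using nn_affine2[OF m, of c 0] c by simp
  finally show ?thesis .
qed

lemma norm_int_enn:
  fixes f :: "'a \<Rightarrow> 'b::{banach,second_countable_topology}"
  shows "ennreal (norm (integral\<^sup>L M f)) \<le> (\<integral>\<^sup>+x. ennreal (norm (f x)) \<partial>M)"
proof (cases "integrable M f")
  case True then show ?thesis by (rule integral_norm_bound_ennreal)
next
  case False then show ?thesis by (simp add: not_integrable_integral_eq)
qed

lemma norm_int_bound:
  fixes f :: "'a \<Rightarrow> 'b::{banach,second_countable_topology}"
  assumes "(\<integral>\<^sup>+x. ennreal (norm (f x)) \<partial>M) \<le> ennreal b" "0 \<le> b"
  shows "norm (integral\<^sup>L M f) \<le> b"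
proof -
  have "ennreal (norm (integral\<^sup>L M f)) \<le> ennreal b" using norm_int_enn assms(1) order_trans by blast
  then show ?thesis using assms(2) by (simp add: ennreal_le_iff)
qed

lemma smooth1_diff: "smooth1 f \<Longrightarrow> f differentiable at x"
  unfolding smooth1_def by (metis funpow_0)

lemma smooth1_cont_deriv: "smooth1 f \<Longrightarrow> continuous_on UNIV (deriv f)"
proof -
  assume "smooth1 f"
  then have "\<forall>x. (deriv ^^ Suc 0) f differentiable at x" unfolding smooth1_def by blast
  then have "\<forall>x. deriv f differentiable at x" by simp
  then show ?thesis by (meson continuous_at_imp_continuous_on differentiable_imp_continuous_within)
qed

lemma bounded_on01:
  fixes g :: "real \<Rightarrow> real"
  assumes "continuous_on {0..1} g"
  shows "\<exists>B. \<forall>t\<in>{0..1}. \<bar>g t\<bar> \<le> B"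
proof -
  have "compact (g ` {0..1})" by (rule compact_continuous_image[OF assms compact_Icc])
  then obtain B where "\<forall>y\<in>g ` {0..1}. norm y \<le> B" using compact_imp_bounded bounded_iff by metis
  then show ?thesis by auto
qed

lemma curve_deriv_bound:
  assumes "curve c"
  shows "\<exists>D. \<forall>t. \<bar>deriv (\<lambda>\<tau>. snd (c \<tau>)) t\<bar> \<le> D"
proof -
  have s: "smooth1 (\<lambda>\<tau>. snd (c \<tau>))" using assms unfolding curve_def by blast
  have z: "\<And>t. t \<notin> {0..1} \<Longrightarrow> deriv (\<lambda>\<tau>. snd (c \<tau>)) t = 0" using assms unfolding curve_def by blast
  obtain B where B: "\<forall>t\<in>{0..1}. \<bar>deriv (\<lambda>\<tau>. snd (c \<tau>)) t\<bar> \<le> B"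
    using bounded_on01[OF continuous_on_subset[OF smooth1_cont_deriv[OF s]]] by blast
  have "\<bar>deriv (\<lambda>\<tau>. snd (c \<tau>)) t\<bar> \<le> max B 0" for t
  proof (cases "t \<in> {0..1}")
    case True then have "\<bar>deriv (\<lambda>\<tau>. snd (c \<tau>)) t\<bar> \<le> B" using B by blast
    then show ?thesis by linarith
  next
    case False then show ?thesis using z[of t] by simp
  qed
  then show ?thesis by blast
qed

lemma const_outside:
  fixes f :: "real \<Rightarrow> real"
  assumes d: "\<And>x. f differentiable at x" and z: "\<And>t. t \<notin> {0..1} \<Longrightarrow> deriv f t = 0"
  shows "\<And>t. t > 1 \<Longrightarrow> f t = f 1" "\<And>t. t < 0 \<Longrightarrow> f t = f 0"
proof -
  have D: "DERIV f x :> deriv f x" for x using d DERIV_deriv_iff_real_differentiable by blast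
  fix t :: real
  assume t: "t > 1"
  from MVT2[OF t D] obtain z where "1 < z" "z < t" "f t - f 1 = (t - 1) * deriv f z" by blast
  then show "f t = f 1" using z[of z] by simp
next
  have D: "DERIV f x :> deriv f x" for x using d DERIV_deriv_iff_real_differentiable by blast
  fix t :: real
  assume t: "t < 0"
  from MVT2[OF t D] obtain z where "t < z" "z < 0" "f 0 - f t = (0 - t) * deriv f z" by blast
  then show "f t = f 0" using z[of z] by simp
qed

lemma curve_fst_bound:
  assumes "curve c"
  shows "\<exists>A. \<forall>t. fst (c t) \<le> A"
proof -
  have s: "smooth1 (\<lambda>\<tau>. fst (c \<tau>))" using assms unfolding curve_def by blast
  have z: "\<And>t. t \<notin> {0..1} \<Longrightarrow> deriv (\<lambda>\<tau>. fst (c \<tau>)) t = 0" using assms unfolding curve_def by blast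
  have d: "\<And>x. (\<lambda>\<tau>. fst (c \<tau>)) differentiable at x" using smooth1_diff[OF s] .
  have cont: "continuous_on {0..1} (\<lambda>\<tau>. fst (c \<tau>))"
    using d by (meson continuous_at_imp_continuous_on differentiable_imp_continuous_within)
  obtain B where B: "\<forall>t\<in>{0..1}. \<bar>fst (c t)\<bar> \<le> B" using bounded_on01[OF cont] by blast
  have "fst (c t) \<le> B" for t
  proof (cases "t \<in> {0..1}")
    case True then have "\<bar>fst (c t)\<bar> \<le> B" using B by blast
    then show ?thesis by linarith
  next
    case False
    then have "t > 1 \<or> t < 0" by auto
    then show ?thesis
    proof
      assume "t > 1" then have "fst (c t) = fst (c 1)" using const_outside(1)[OF d z] by blast
      moreover have "\<bar>fst (c 1)\<bar> \<le> B" using B by simp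
      ultimately show ?thesis by linarith
    next
      assume "t < 0" then have "fst (c t) = fst (c 0)" using const_outside(2)[OF d z] by blast
      moreover have "\<bar>fst (c 0)\<bar> \<le> B" using B by simp
      ultimately show ?thesis by linarith
    qed
  qed
  then show ?thesis by blast
qed

lemma ab_le: "\<bar>a * b\<bar> \<le> a\<^sup>2 + b\<^sup>2" for a b :: real
proof -
  have "0 \<le> (\<bar>a\<bar> - \<bar>b\<bar>)\<^sup>2" by simp
  also have "(\<bar>a\<bar> - \<bar>b\<bar>)\<^sup>2 = a\<^sup>2 - 2 * (\<bar>a\<bar> * \<bar>b\<bar>) + b\<^sup>2"
    by (simp add: power2_eq_square algebra_simps)
  finally have "2 * (\<bar>a\<bar> * \<bar>b\<bar>) \<le> a\<^sup>2 + b\<^sup>2" by linarith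
  moreover have "0 \<le> \<bar>a\<bar> * \<bar>b\<bar>" by simp
  ultimately show ?thesis unfolding abs_mult by linarith
qed

lemma apb_le: "(a + b)\<^sup>2 \<le> 2 * a\<^sup>2 + 2 * b\<^sup>2" for a b :: real
proof -
  have "0 \<le> (a - b)\<^sup>2" by simp
  then show ?thesis by (simp add: power2_eq_square algebra_simps)
qed

lemma int_HF:
  fixes H F :: "real \<times> real \<Rightarrow> real"
  assumes F: "F \<in> borel_measurable lborel" "integrable lborel (\<lambda>x. (F x)\<^sup>2)"
    and H: "continuous_on UNIV H" "compact (closure {x. H x \<noteq> 0})"
  shows "integrable lborel (\<lambda>x. H x * F x)"
proof -
  have iH: "integrable lborel (\<lambda>x. (H x)\<^sup>2)"
  proof (rule int_cs[OF _ _ H(2)])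
    show "continuous_on UNIV (\<lambda>x. (H x)\<^sup>2)" by (rule continuous_on_power[OF H(1)])
    fix x assume "x \<notin> closure {x. H x \<noteq> 0}"
    moreover have "{x. H x \<noteq> 0} \<subseteq> closure {x. H x \<noteq> 0}" by (rule closure_subset)
    ultimately have "H x = 0" by (metis (mono_tags, lifting) mem_Collect_eq subsetD)
    then show "(H x)\<^sup>2 = 0" by simp
  qed
  have Hm: "H \<in> borel_measurable lborel" using borel_measurable_continuous_onI[OF H(1)] by simp
  show ?thesis
  proof (rule Bochner_Integration.integrable_bound[where f="\<lambda>x. (H x)\<^sup>2 + (F x)\<^sup>2"])
    show "integrable lborel (\<lambda>x. (H x)\<^sup>2 + (F x)\<^sup>2)" using iH F(2) by simp
    show "(\<lambda>x. H x * F x) \<in> borel_measurable lborel" using Hm F(1) by measurable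
    show "AE x in lborel. norm (H x * F x) \<le> norm ((H x)\<^sup>2 + (F x)\<^sup>2)"
      using ab_le by (auto intro!: AE_I2 simp: abs_of_nonneg)
  qed
qed

lemma Erep_add:
  assumes A: "E_rep c h F'" and B: "E_rep c g F"
    and z: "\<And>H. continuous_on UNIV H \<and> compact (closure {x. H x \<noteq> 0}) \<Longrightarrow>
      (\<integral>t. (LBINT x1=0..fst (c t). H (x1, snd (c t))) * g t * deriv (\<lambda>\<tau>. snd (c \<tau>)) t \<partial>lborel) = 0"
  shows "E_rep c h (\<lambda>x. F' x + F x)"
proof -
  have m: "F' \<in> borel_measurable lborel" "F \<in> borel_measurable lborel"
    and s: "integrable lborel (\<lambda>x. (F' x)\<^sup>2)" "integrable lborel (\<lambda>x. (F x)\<^sup>2)"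
    using A B unfolding E_rep_def by blast+
  have m2: "(\<lambda>x. F' x + F x) \<in> borel_measurable lborel" using m by measurable
  have s2: "integrable lborel (\<lambda>x. (F' x + F x)\<^sup>2)"
  proof (rule Bochner_Integration.integrable_bound[where f="\<lambda>x. 2 * (F' x)\<^sup>2 + 2 * (F x)\<^sup>2"])
    show "integrable lborel (\<lambda>x. 2 * (F' x)\<^sup>2 + 2 * (F x)\<^sup>2)" using s by simp
    show "(\<lambda>x. (F' x + F x)\<^sup>2) \<in> borel_measurable lborel" using m by measurable
    show "AE x in lborel. norm ((F' x + F x)\<^sup>2) \<le> norm (2 * (F' x)\<^sup>2 + 2 * (F x)\<^sup>2)"
      using apb_le by (auto intro!: AE_I2)
  qed
  show ?thesis unfolding E_rep_def
  proof (intro conjI m2 s2 allI impI)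
    fix H :: "real \<times> real \<Rightarrow> real"
    assume H: "continuous_on UNIV H \<and> compact (closure {x. H x \<noteq> 0})"
    have i1: "integrable lborel (\<lambda>x. H x * F' x)" using int_HF[OF m(1) s(1)] H by blast
    have i2: "integrable lborel (\<lambda>x. H x * F x)" using int_HF[OF m(2) s(2)] H by blast
    have dB: "\<forall>H. continuous_on UNIV H \<and> compact (closure {x. H x \<noteq> 0}) \<longrightarrow>
        (\<integral>x. H x * F x \<partial>lborel) =
        (\<integral>t. (LBINT x1=0..fst (c t). H (x1, snd (c t))) * g t * deriv (\<lambda>\<tau>. snd (c \<tau>)) t \<partial>lborel)"
      using B unfolding E_rep_def by (elim conjE)
    have dA: "\<forall>H. continuous_on UNIV H \<and> compact (closure {x. H x \<noteq> 0}) \<longrightarrow>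
        (\<integral>x. H x * F' x \<partial>lborel) =
        (\<integral>t. (LBINT x1=0..fst (c t). H (x1, snd (c t))) * h t * deriv (\<lambda>\<tau>. snd (c \<tau>)) t \<partial>lborel)"
      using A unfolding E_rep_def by (elim conjE)
    have "(\<integral>x. H x * (F' x + F x) \<partial>lborel) = (\<integral>x. H x * F' x \<partial>lborel) + (\<integral>x. H x * F x \<partial>lborel)"
      using i1 i2 by (simp add: distrib_left)
    also have "(\<integral>x. H x * F x \<partial>lborel) = 0" using dB[rule_format, OF H] z[OF H] by simp
    also have "(\<integral>x. H x * F' x \<partial>lborel) = (\<integral>t. (LBINT x1=0..fst (c t). H (x1, snd (c t))) * h t * deriv (\<lambda>\<tau>. snd (c \<tau>)) t \<partial>lborel)"
      by (rule dA[rule_format, OF H])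
    finally show "(\<integral>x. H x * (F' x + F x) \<partial>lborel) = (\<integral>t. (LBINT x1=0..fst (c t). H (x1, snd (c t))) * h t * deriv (\<lambda>\<tau>. snd (c \<tau>)) t \<partial>lborel)"
      by simp
  qed
qed

lemma Erep_bound:
  assumes c: "c \<in> CRot"
  obtains M where "M \<ge> 0" "\<And>s r F. s \<le> r \<Longrightarrow> E_rep c (indicator {s..r}) F \<Longrightarrow> AE x in lborel. \<bar>F x\<bar> \<le> M"
proof -
  obtain M0 where M0: "\<And>s t. s < t \<Longrightarrow> (\<exists>F. E_rep c (indicator {s..t}) F) \<and>
        (\<forall>F. E_rep c (indicator {s..t}) F \<longrightarrow> (AE x in lborel. \<bar>F x\<bar> \<le> M0))"
    using c unfolding CRot_def by blast
  have "AE x in lborel. \<bar>F x\<bar> \<le> 2 * \<bar>M0\<bar>" if sr: "s \<le> r" and F: "E_rep c (indicator {s..r}) F" for s r F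
  proof (cases "s < r")
    case True
    then have "AE x in lborel. \<bar>F x\<bar> \<le> M0" using M0 F by blast
    then show ?thesis by eventually_elim simp
  next
    case False
    then have r: "r = s" using sr by simp
    obtain F' where F': "E_rep c (indicator {s..s+1}) F'" using M0[of s "s+1"] by auto
    have "E_rep c (indicator {s..s+1}) (\<lambda>x. F' x + F x)"
    proof (rule Erep_add[OF F' F])
      fix H :: "real \<times> real \<Rightarrow> real"
      have "AE t in lborel. t \<noteq> s" by (rule AE_lborel_singleton)
      then have "AE t in lborel. (LBINT x1=0..fst (c t). H (x1, snd (c t))) * indicator {s..r} t * deriv (\<lambda>\<tau>. snd (c \<tau>)) t = 0"
        by eventually_elim (simp add: r)
      then show "(\<integral>t. (LBINT x1=0..fst (c t). H (x1, snd (c t))) * indicator {s..r} t * deriv (\<lambda>\<tau>. snd (c \<tau>)) t \<partial>lborel) = 0"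
        by (rule integral_eq_zero_AE)
    qed
    then have a1: "AE x in lborel. \<bar>F' x + F x\<bar> \<le> M0" using M0[of s "s+1"] by auto
    have a2: "AE x in lborel. \<bar>F' x\<bar> \<le> M0" using M0[of s "s+1"] F' by auto
    from a1 a2 show ?thesis by eventually_elim linarith
  qed
  then show ?thesis using that[of "2 * \<bar>M0\<bar>"] by simp
qed

definition NN :: "(real \<times> real \<Rightarrow> real) \<Rightarrow> real" where
  "NN \<rho> = enn2real (\<integral>\<^sup>+x. ennreal (cmod (chi_check \<rho> 0 x)) \<partial>lborel)"

lemma NN_eq:
  assumes lp: "LP_profile \<rho>"
  shows "(\<integral>\<^sup>+x. ennreal (cmod (chi_check \<rho> j x)) \<partial>lborel) = ennreal (NN \<rho>)"
proof -
  have fin: "(\<integral>\<^sup>+x. ennreal (cmod (chi_check \<rho> 0 x)) \<partial>lborel) < \<infinity>" by (rule L1_0[OF lp])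
  have "ennreal (NN \<rho>) = (\<integral>\<^sup>+x. ennreal (cmod (chi_check \<rho> 0 x)) \<partial>lborel)"
    unfolding NN_def by (rule ennreal_enn2real) (use fin in simp)
  then show ?thesis unfolding L1_j[OF lp, of j] by simp
qed

lemma NN_nonneg: "NN \<rho> \<ge> 0" unfolding NN_def by simp

lemma transl:
  assumes lp: "LP_profile \<rho>" and that: "\<bar>s\<bar> = 1"
  shows "(\<integral>\<^sup>+y. ennreal (cmod (chi_check \<rho> j (t + s *\<^sub>R y))) \<partial>lborel) = ennreal (NN \<rho>)"
proof -
  have m: "(\<lambda>y. ennreal (cmod (chi_check \<rho> j y))) \<in> borel_measurable borel"
    using meas_chi_check[OF lp, of j] by measurable
  have s: "s \<noteq> 0" using that by auto
  show ?thesis using nn_affine2[OF m s, of t] that NN_eq[OF lp, of j] by simp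
qed

lemma Sj_bound:
  assumes lp: "LP_profile \<rho>" and F: "AE y in lborel. \<bar>F y\<bar> \<le> K" and K: "0 \<le> K"
  shows "cmod (Sj \<rho> j F x) \<le> K * NN \<rho>"
  unfolding Sj_def
proof (rule norm_int_bound)
  show "0 \<le> K * NN \<rho>" using K NN_nonneg by simp
  have mc: "(\<lambda>y. ennreal (cmod (chi_check \<rho> j (x + (-1) *\<^sub>R y)))) \<in> borel_measurable lborel"
    using meas_chi_check[OF lp, of j] by measurable
  have "(\<integral>\<^sup>+y. ennreal (cmod (chi_check \<rho> j (x - y) * complex_of_real (F y))) \<partial>lborel) \<le>
      (\<integral>\<^sup>+y. ennreal (cmod (chi_check \<rho> j (x + (-1) *\<^sub>R y))) * ennreal K \<partial>lborel)"
  proof (rule nn_integral_mono_AE)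
    show "AE y in lborel. ennreal (cmod (chi_check \<rho> j (x - y) * complex_of_real (F y))) \<le>
        ennreal (cmod (chi_check \<rho> j (x + (-1) *\<^sub>R y))) * ennreal K"
      using F
    proof eventually_elim
      case (elim y)
      have "cmod (chi_check \<rho> j (x - y) * complex_of_real (F y)) = cmod (chi_check \<rho> j (x - y)) * \<bar>F y\<bar>"
        by (simp add: norm_mult)
      also have "\<dots> \<le> cmod (chi_check \<rho> j (x - y)) * K" using elim by (intro mult_left_mono) auto
      finally show ?case by (simp add: ennreal_mult'[symmetric] K ennreal_leI)
    qed
  qed
  also have "\<dots> = (\<integral>\<^sup>+y. ennreal (cmod (chi_check \<rho> j (x + (-1) *\<^sub>R y))) \<partial>lborel) * ennreal K"
    by (rule nn_integral_multc[OF mc])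
  also have "\<dots> = ennreal (NN \<rho>) * ennreal K" using transl[OF lp, of "-1" j x] by simp
  also have "\<dots> = ennreal (K * NN \<rho>)" using K NN_nonneg by (simp add: ennreal_mult' mult.commute)
  finally show "(\<integral>\<^sup>+y. ennreal (cmod (chi_check \<rho> j (x - y) * complex_of_real (F y))) \<partial>lborel) \<le> ennreal (K * NN \<rho>)" .
qed

definition Gf :: "(real \<times> real \<Rightarrow> real) \<Rightarrow> int \<Rightarrow> real \<Rightarrow> real \<Rightarrow> real \<times> real \<Rightarrow> real \<Rightarrow> ennreal" where
  "Gf \<rho> j a b x \<xi> = ennreal (indicator {0<..<a} \<xi> * cmod (chi_check \<rho> j (fst x - \<xi>, snd x - b)))"

lemma Gf_meas:
  assumes lp: "LP_profile \<rho>"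
  shows "case_prod (Gf \<rho> j a b) \<in> borel_measurable (lborel \<Otimes>\<^sub>M lborel)"
proof -
  have mm: "(\<lambda>p::(real\<times>real)\<times>real. (fst (fst p) - snd p, snd (fst p) - b)) \<in> borel_measurable borel"
    by (intro borel_measurable_continuous_onI continuous_intros)
  have m1: "(\<lambda>p::(real\<times>real)\<times>real. chi_check \<rho> j (fst (fst p) - snd p, snd (fst p) - b)) \<in> borel_measurable borel"
    using measurable_compose[OF mm meas_chi_check[OF lp, of j]] by (simp add: o_def)
  have ms: "(\<lambda>p::(real\<times>real)\<times>real. snd p) \<in> borel_measurable borel"
    by (intro borel_measurable_continuous_onI continuous_intros)
  have mi: "(indicator {0<..<a} :: real \<Rightarrow> real) \<in> borel_measurable borel" by measurable
  have m2: "(\<lambda>p::(real\<times>real)\<times>real. indicator {0<..<a} (snd p) :: real) \<in> borel_measurable borel"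
    using measurable_compose[OF ms mi] by (simp add: o_def)
  note [measurable] = m1 m2
  have "(\<lambda>p::(real\<times>real)\<times>real. ennreal (indicator {0<..<a} (snd p) * cmod (chi_check \<rho> j (fst (fst p) - snd p, snd (fst p) - b)))) \<in> borel_measurable borel"
    by measurable
  then show ?thesis by (simp add: lborel_prod Gf_def case_prod_beta')
qed

lemma Gf_pt:
  assumes a: "0 < a"
  shows "ennreal (cmod (LBINT \<xi>=0..a. chi_check \<rho> j (fst x - \<xi>, snd x - b))) \<le> (\<integral>\<^sup>+\<xi>. Gf \<rho> j a b x \<xi> \<partial>lborel)"
proof -
  have eqI: "(LBINT \<xi>=0..a. chi_check \<rho> j (fst x - \<xi>, snd x - b)) =
     integral\<^sup>L lborel (\<lambda>\<xi>. indicator {0<..<a} \<xi> *\<^sub>R chi_check \<rho> j (fst x - \<xi>, snd x - b))"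
  proof -
    have e: "einterval 0 (ereal a) = {0<..<a}" using einterval_eq_Icc[of 0 a] by (simp add: zero_ereal_def)
    show ?thesis using a by (simp add: interval_lebesgue_integral_def set_lebesgue_integral_def e)
  qed
  have "ennreal (cmod (LBINT \<xi>=0..a. chi_check \<rho> j (fst x - \<xi>, snd x - b))) \<le>
     (\<integral>\<^sup>+\<xi>. ennreal (norm (indicator {0<..<a} \<xi> *\<^sub>R chi_check \<rho> j (fst x - \<xi>, snd x - b))) \<partial>lborel)"
    unfolding eqI by (rule norm_int_enn)
  also have "\<dots> = (\<integral>\<^sup>+\<xi>. Gf \<rho> j a b x \<xi> \<partial>lborel)"
    by (intro nn_integral_cong) (simp add: Gf_def indicator_def)
  finally show ?thesis .
qed

lemma Gf_int:
  assumes lp: "LP_profile \<rho>" and a: "0 < a"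
  shows "(\<integral>\<^sup>+x. (\<integral>\<^sup>+\<xi>. Gf \<rho> j a b x \<xi> \<partial>lborel) \<partial>lborel) = ennreal (NN \<rho> * a)"
proof -
  have "(\<integral>\<^sup>+x. (\<integral>\<^sup>+\<xi>. Gf \<rho> j a b x \<xi> \<partial>lborel) \<partial>lborel) = (\<integral>\<^sup>+\<xi>. (\<integral>\<^sup>+x. Gf \<rho> j a b x \<xi> \<partial>lborel) \<partial>lborel)"
    by (rule lborel_pair.Fubini'[symmetric, OF Gf_meas[OF lp]])
  also have "\<dots> = (\<integral>\<^sup>+\<xi>. ennreal (NN \<rho>) * indicator {0<..<a} \<xi> \<partial>lborel)"
  proof (intro nn_integral_cong)
    fix \<xi> :: real
    have mc: "(\<lambda>x. ennreal (cmod (chi_check \<rho> j ((-\<xi>, -b) + 1 *\<^sub>R x)))) \<in> borel_measurable lborel"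
      using meas_chi_check[OF lp, of j] by measurable
    have eqp: "(fst x - \<xi>, snd x - b) = (-\<xi>, -b) + 1 *\<^sub>R x" for x :: "real \<times> real" by (cases x) simp
    have "(\<integral>\<^sup>+x. Gf \<rho> j a b x \<xi> \<partial>lborel) = (\<integral>\<^sup>+x. ennreal (indicator {0<..<a} \<xi>) * ennreal (cmod (chi_check \<rho> j ((-\<xi>, -b) + 1 *\<^sub>R x))) \<partial>lborel)"
      by (intro nn_integral_cong) (simp add: Gf_def eqp ennreal_mult')
    also have "\<dots> = ennreal (indicator {0<..<a} \<xi>) * (\<integral>\<^sup>+x. ennreal (cmod (chi_check \<rho> j ((-\<xi>, -b) + 1 *\<^sub>R x))) \<partial>lborel)"
      by (rule nn_integral_cmult[OF mc])
    also have "\<dots> = ennreal (indicator {0<..<a} \<xi>) * ennreal (NN \<rho>)" using transl[OF lp, of 1 j "(-\<xi>, -b)"] by simp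
    finally show "(\<integral>\<^sup>+x. Gf \<rho> j a b x \<xi> \<partial>lborel) = ennreal (NN \<rho>) * indicator {0<..<a} \<xi>"
      by (simp add: mult.commute ennreal_indicator)
  qed
  also have "\<dots> = ennreal (NN \<rho>) * emeasure lborel {0<..<a}"
    by (rule nn_integral_cmult_indicator) simp
  also have "\<dots> = ennreal (NN \<rho> * a)" using a NN_nonneg by (simp add: ennreal_mult')
  finally show ?thesis .
qed

lemma inner_bound:
  assumes lp: "LP_profile \<rho>" and F: "AE y in lborel. \<bar>F y\<bar> \<le> K" and K: "0 \<le> K" and a: "0 < fst (c r)"
  shows "cmod (L2_inner (Sj \<rho> j F) (fj \<rho> j c r)) \<le>
    K * NN \<rho> * \<bar>deriv (\<lambda>\<tau>. snd (c \<tau>)) r\<bar> * (NN \<rho> * fst (c r))"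
proof -
  define d where "d = deriv (\<lambda>\<tau>. snd (c \<tau>)) r"
  define A where "A = fst (c r)"
  define b where "b = snd (c r)"
  define G where "G = (\<lambda>x. \<integral>\<^sup>+\<xi>. Gf \<rho> j A b x \<xi> \<partial>lborel)"
  have A: "0 < A" using a unfolding A_def .
  have Gm: "G \<in> borel_measurable lborel"
    unfolding G_def by (rule lborel.borel_measurable_nn_integral[OF Gf_meas[OF lp]])
  have Gi: "(\<integral>\<^sup>+x. G x \<partial>lborel) = ennreal (NN \<rho> * A)"
    unfolding G_def by (rule Gf_int[OF lp A])
  have KN: "0 \<le> K * NN \<rho> * \<bar>d\<bar>" using K NN_nonneg by simp
  have fjx: "fj \<rho> j c r x = complex_of_real d * (LBINT \<xi>=0..A. chi_check \<rho> j (fst x - \<xi>, snd x - b))" for x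
    unfolding fj_def d_def A_def b_def by simp
  have pt: "ennreal (cmod (Sj \<rho> j F x * cnj (fj \<rho> j c r x))) \<le> ennreal (K * NN \<rho> * \<bar>d\<bar>) * G x" for x
  proof -
    define L where "L = cmod (LBINT \<xi>=0..A. chi_check \<rho> j (fst x - \<xi>, snd x - b))"
    have L: "0 \<le> L" unfolding L_def by simp
    have "cmod (Sj \<rho> j F x * cnj (fj \<rho> j c r x)) = cmod (Sj \<rho> j F x) * (\<bar>d\<bar> * L)"
      unfolding fjx L_def by (simp add: norm_mult)
    also have "\<dots> \<le> (K * NN \<rho>) * (\<bar>d\<bar> * L)"
      by (intro mult_right_mono Sj_bound[OF lp F K]) (use L in simp)
    finally have "ennreal (cmod (Sj \<rho> j F x * cnj (fj \<rho> j c r x))) \<le> ennreal (K * NN \<rho> * \<bar>d\<bar>) * ennreal L"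
      using KN L by (simp add: ennreal_mult'[symmetric] ennreal_leI mult.assoc)
    also have "\<dots> \<le> ennreal (K * NN \<rho> * \<bar>d\<bar>) * G x"
      unfolding L_def G_def by (intro mult_left_mono Gf_pt A) simp
    finally show ?thesis .
  qed
  have "cmod (L2_inner (Sj \<rho> j F) (fj \<rho> j c r)) \<le> K * NN \<rho> * \<bar>d\<bar> * (NN \<rho> * A)"
    unfolding L2_inner_def
  proof (rule norm_int_bound)
    show "0 \<le> K * NN \<rho> * \<bar>d\<bar> * (NN \<rho> * A)" using KN NN_nonneg A by simp
    have "(\<integral>\<^sup>+x. ennreal (cmod (Sj \<rho> j F x * cnj (fj \<rho> j c r x))) \<partial>lborel) \<le>
       (\<integral>\<^sup>+x. ennreal (K * NN \<rho> * \<bar>d\<bar>) * G x \<partial>lborel)"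
      by (intro nn_integral_mono pt)
    also have "\<dots> = ennreal (K * NN \<rho> * \<bar>d\<bar>) * (\<integral>\<^sup>+x. G x \<partial>lborel)"
      by (rule nn_integral_cmult[OF Gm])
    also have "\<dots> = ennreal (K * NN \<rho> * \<bar>d\<bar> * (NN \<rho> * A))"
      unfolding Gi using KN NN_nonneg A by (simp add: ennreal_mult')
    finally show "(\<integral>\<^sup>+x. ennreal (norm (Sj \<rho> j F x * cnj (fj \<rho> j c r x))) \<partial>lborel) \<le> ennreal (K * NN \<rho> * \<bar>d\<bar> * (NN \<rho> * A))"
      by simp
  qed
  then show ?thesis unfolding d_def A_def .
qed

theorem lemma9p2:
  fixes \<rho>0 :: "real \<times> real \<Rightarrow> real" and c :: "real \<Rightarrow> real \<times> real"
  assumes "LP_profile \<rho>0" and "c \<in> CRot"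
  shows "\<exists>C>0.
    (\<forall>j s r1 r2 F. j \<ge> -1 \<longrightarrow> s \<le> r1 \<longrightarrow> s \<le> r2 \<longrightarrow> E_rep c (indicator {s..r1}) F \<longrightarrow>
        cmod (L2_inner (Sj \<rho>0 j F) (fj \<rho>0 j c r2)) \<le> C) \<and>
    (\<forall>j s t G. j \<ge> -1 \<longrightarrow> s \<le> t \<longrightarrow> (\<forall>r. s \<le> r \<longrightarrow> E_rep c (indicator {s..r}) (G r)) \<longrightarrow>
        cmod (LBINT r=s..t. L2_inner (Sj \<rho>0 j (G r)) (fj \<rho>0 j c r)) \<le> C * (t - s))"
proof -
  note lp = assms(1)
  have cv: "curve c" using assms(2) unfolding CRot_def by blast
  obtain M where M: "M \<ge> 0" "\<And>s r F. s \<le> r \<Longrightarrow> E_rep c (indicator {s..r}) F \<Longrightarrow> AE x in lborel. \<bar>F x\<bar> \<le> M"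
    using Erep_bound[OF assms(2)] by blast
  obtain D where D: "\<And>t. \<bar>deriv (\<lambda>\<tau>. snd (c \<tau>)) t\<bar> \<le> D" using curve_deriv_bound[OF cv] by blast
  obtain A where A: "\<And>t. fst (c t) \<le> A" using curve_fst_bound[OF cv] by blast
  have pos: "\<And>t. 0 < fst (c t)" using cv unfolding curve_def by blast
  have D0: "0 \<le> D" using D[of 0] by linarith
  have A0: "0 \<le> A" using A[of 0] pos[of 0] by linarith
  define C where "C = M * NN \<rho>0 * D * (NN \<rho>0 * A) + 1"
  have C0: "0 \<le> M * NN \<rho>0 * D * (NN \<rho>0 * A)" using M(1) D0 A0 NN_nonneg by simp
  have Cpos: "C > 0" unfolding C_def using C0 by linarith
  have first: "cmod (L2_inner (Sj \<rho>0 j F) (fj \<rho>0 j c r2)) \<le> C"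
    if "s \<le> r1" "E_rep c (indicator {s..r1}) F" for j s r1 r2 F
  proof -
    have "cmod (L2_inner (Sj \<rho>0 j F) (fj \<rho>0 j c r2)) \<le>
        M * NN \<rho>0 * \<bar>deriv (\<lambda>\<tau>. snd (c \<tau>)) r2\<bar> * (NN \<rho>0 * fst (c r2))"
      by (rule inner_bound[OF lp M(2)[OF that] M(1) pos])
    also have "\<dots> \<le> M * NN \<rho>0 * D * (NN \<rho>0 * A)"
    proof (intro mult_mono D A mult_left_mono)
    qed (use M(1) NN_nonneg D0 A0 pos[of r2] in auto)
    also have "\<dots> \<le> C" unfolding C_def by simp
    finally show ?thesis .
  qed
  have second: "cmod (LBINT r=s..t. L2_inner (Sj \<rho>0 j (G r)) (fj \<rho>0 j c r)) \<le> C * (t - s)"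
    if st: "s \<le> t" and G: "\<forall>r. s \<le> r \<longrightarrow> E_rep c (indicator {s..r}) (G r)" for j s t G
  proof -
    define L where "L = (\<lambda>r. L2_inner (Sj \<rho>0 j (G r)) (fj \<rho>0 j c r))"
    have e: "einterval (ereal s) (ereal t) = {s<..<t}" by simp
    have eq: "(LBINT r=s..t. L r) = integral\<^sup>L lborel (\<lambda>r. indicator {s<..<t} r *\<^sub>R L r)"
      using st by (simp add: interval_lebesgue_integral_def set_lebesgue_integral_def e)
    have "cmod (integral\<^sup>L lborel (\<lambda>r. indicator {s<..<t} r *\<^sub>R L r)) \<le> C * (t - s)"
    proof (rule norm_int_bound)
      show "0 \<le> C * (t - s)" using Cpos st by simp
      have "(\<integral>\<^sup>+r. ennreal (norm (indicator {s<..<t} r *\<^sub>R L r)) \<partial>lborel) \<le>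
          (\<integral>\<^sup>+r. ennreal C * indicator {s<..<t} r \<partial>lborel)"
      proof (rule nn_integral_mono)
        fix r
        show "ennreal (norm (indicator {s<..<t} r *\<^sub>R L r)) \<le> ennreal C * indicator {s<..<t} r"
        proof (cases "r \<in> {s<..<t}")
          case True
          then have "s \<le> r" by simp
          then have "cmod (L r) \<le> C" unfolding L_def using first[of s r "G r" j r] G by blast
          then show ?thesis using True by (simp add: ennreal_leI)
        next
          case False then show ?thesis by simp
        qed
      qed
      also have "\<dots> = ennreal C * emeasure lborel {s<..<t}"
        by (rule nn_integral_cmult_indicator) simp
      also have "\<dots> = ennreal (C * (t - s))" using st Cpos by (simp add: ennreal_mult')
      finally show "(\<integral>\<^sup>+r. ennreal (norm (indicator {s<..<t} r *\<^sub>R L r)) \<partial>lborel) \<le> ennreal (C * (t - s))" .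
    qed
    then show ?thesis using eq unfolding L_def by simp
  qed
  show ?thesis
    by (rule exI[of _ C]) (use Cpos first second in blast)
qed

end
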